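(* Let $z_1,\dots,z_n\in\mathbb D$. Then $$2\pi\sum_{k=1}^n\operatorname{dist}(z_k,\mathbb T)\ \le\ \int_{\mathbb D}\left|\sum_{k=1}^n\frac{1}{z-z_k}\right|dm(z).$$
   Context: $\mathbb D$ is the open unit disc in $\mathbb C$, $\mathbb T$ the unit circle, $\operatorname{dist}(z,\mathbb T)=1-|z|$, and $m$ planar Lebesgue measure. *)

theory Defs
  imports "HOL-Analysis.Analysis"
begin

end

theory Submission
  imports Defs "HOL-Complex_Analysis.Complex_Analysis"
begin


lemma borel_measurable_Complex[measurable]:
  fixes f g :: "'a \<Rightarrow> real"
  assumes [measurable]: "f \<in> borel_measurable M" "g \<in> borel_measurable M"
  shows "(\<lambda>x. Complex (f x) (g x)) \<in> borel_measurable M"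
  unfolding Complex_eq by measurable

lemma cot_subst:
  fixes H :: "complex \<Rightarrow> ennreal" and y :: real
  assumes [measurable]: "H \<in> borel_measurable borel"
    and H0: "\<And>z. 1 \<le> cmod z \<Longrightarrow> H z = 0"
    and y: "0 < y"
  shows "(\<integral>\<^sup>+x. H (Complex x y) \<partial>lborel)
     = (\<integral>\<^sup>+\<theta>. H (Complex (y * cot \<theta>) y) * ennreal (y / (sin \<theta>)\<^sup>2) * indicator {0<..<pi} \<theta> \<partial>lborel)"
proof (cases "y < 1")
  case False
  have l: "H (Complex x y) = 0" for x
    by (rule H0) (use False abs_Im_le_cmod[of "Complex x y"] in auto)
  have r: "H (Complex (y * cot \<theta>) y) = 0" for \<theta>
    by (rule H0) (use False abs_Im_le_cmod[of "Complex (y * cot \<theta>) y"] in auto)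
  show ?thesis by (simp add: l r)
next
  case True
  have y2: "y\<^sup>2 < 1" using power_strict_mono[of y 1 2] True y by simp
  define a where "a = arcsin y"
  define b where "b = pi - a"
  define s where "s = sqrt (1 - y\<^sup>2)"
  have a0: "0 < a" using y True unfolding a_def using arcsin_less_arcsin[of 0 y] by simp
  have a2: "a < pi/2" using y True unfolding a_def using arcsin_less_arcsin[of y 1] by simp
  have sa: "sin a = y" using y True unfolding a_def by simp
  have ca: "cos a = s" using y True unfolding a_def s_def by (simp add: cos_arcsin)
  have ab: "a < b" using a2 unfolding b_def by simp
  define g where "g \<theta> = - (y * cot \<theta>)" for \<theta>
  define g' where "g' \<theta> = y / (sin \<theta>)\<^sup>2" for \<theta>
  have sinpos: "sin \<theta> > 0" if "\<theta> \<in> {a..b}" for \<theta>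
    using that a0 a2 unfolding b_def by (intro sin_gt_zero) auto
  have ga: "g a = - s" unfolding g_def cot_def using sa ca y by simp
  have gb: "g b = s" unfolding g_def cot_def b_def using sa ca y by simp
  have deriv: "(g has_real_derivative g' \<theta>) (at \<theta>)" if "\<theta> \<in> {a..b}" for \<theta>
  proof -
    have "sin \<theta> \<noteq> 0" using sinpos[OF that] by simp
    from DERIV_cmult[OF DERIV_cot[OF this], of "-y"] show ?thesis
      unfolding g_def g'_def by (simp add: field_simps)
  qed
  have cont: "continuous_on {a..b} g'"
    unfolding g'_def using sinpos by (intro continuous_intros) force+
  have g'nn: "\<theta> \<in> {a..b} \<Longrightarrow> g' \<theta> \<ge> 0" for \<theta> using y unfolding g'_def by simp
  have "(\<integral>\<^sup>+x. H (Complex x y) \<partial>lborel) = (\<integral>\<^sup>+x. H (Complex (-x) y) \<partial>lborel)"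
    using nn_integral_real_affine[of "\<lambda>x. H (Complex x y)" "-1" 0] by simp
  also have "\<dots> = (\<integral>\<^sup>+x. H (Complex (-x) y) * indicator {g a..g b} x \<partial>lborel)"
  proof (rule nn_integral_cong)
    fix x :: real
    show "H (Complex (-x) y) = H (Complex (-x) y) * indicator {g a..g b} x"
    proof (cases "x \<in> {g a..g b}")
      case False
      then have "s < \<bar>x\<bar>" unfolding ga gb by auto
      then have "s\<^sup>2 < \<bar>x\<bar>\<^sup>2" using s_def y2 by (intro power_strict_mono) auto
      then have "s\<^sup>2 < x\<^sup>2" by simp
      then have "1 < x\<^sup>2 + y\<^sup>2" unfolding s_def using y2 by simp
      then have "1 \<le> cmod (Complex (-x) y)" by (simp add: complex_norm)
      then show ?thesis using H0 by simp
    qed simp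
  qed
  also have "\<dots> = (\<integral>\<^sup>+\<theta>. H (Complex (- g \<theta>) y) * ennreal (g' \<theta>) * indicator {a..b} \<theta> \<partial>lborel)"
    by (rule nn_integral_substitution_aux[where f="\<lambda>x. H (Complex (-x) y)", OF _ _ deriv cont g'nn ab]) auto
  also have "\<dots> = (\<integral>\<^sup>+\<theta>. H (Complex (y * cot \<theta>) y) * ennreal (y / (sin \<theta>)\<^sup>2) * indicator {0<..<pi} \<theta> \<partial>lborel)"
  proof (rule nn_integral_cong)
    fix \<theta> :: real
    show "H (Complex (- g \<theta>) y) * ennreal (g' \<theta>) * indicator {a..b} \<theta> = H (Complex (y * cot \<theta>) y) * ennreal (y / (sin \<theta>)\<^sup>2) * indicator {0<..<pi} \<theta>"
    proof (cases "\<theta> \<in> {a..b}")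
      case True
      then have "\<theta> \<in> {0<..<pi}" using a0 a2 unfolding b_def by auto
      then show ?thesis using True unfolding g_def g'_def by simp
    next
      case nab: False
      show ?thesis
      proof (cases "\<theta> \<in> {0<..<pi}")
        case th: True
        have st: "sin \<theta> < y"
        proof (cases "\<theta> < a")
          case True
          show ?thesis
          proof (rule ccontr)
            assume "\<not> sin \<theta> < y"
            then have "arcsin y \<le> arcsin (sin \<theta>)" using y True by (intro arcsin_le_arcsin) auto
            also have "arcsin (sin \<theta>) = \<theta>" using th True a2 by (intro arcsin_sin) auto
            finally show False using True a_def by simp
          qed
        next
          case False
          then have t2: "pi - \<theta> < a" "0 < pi - \<theta>" using nab th unfolding b_def by auto
          show ?thesis
          proof (rule ccontr)
            assume "\<not> sin \<theta> < y"
            then have "arcsin y \<le> arcsin (sin (pi - \<theta>))" using y by (intro arcsin_le_arcsin) auto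
            also have "arcsin (sin (pi - \<theta>)) = pi - \<theta>" using t2 a2 by (intro arcsin_sin) auto
            finally show False using t2 a_def by simp
          qed
        qed
        have sp: "sin \<theta> > 0" using th by (intro sin_gt_zero) auto
        have "(cmod (Complex (y * cot \<theta>) y))\<^sup>2 = (y * cot \<theta>)\<^sup>2 + y\<^sup>2"
          by (simp add: complex_norm)
        also have "\<dots> = y\<^sup>2 / (sin \<theta>)\<^sup>2"
          proof -
          have sn: "(sin \<theta>)\<^sup>2 \<noteq> 0" using sp by simp
          have "(y * cot \<theta>)\<^sup>2 = y\<^sup>2 * (cos \<theta>)\<^sup>2 / (sin \<theta>)\<^sup>2"
            unfolding cot_def by (simp add: power_mult_distrib power_divide)
          moreover have "y\<^sup>2 = y\<^sup>2 * (sin \<theta>)\<^sup>2 / (sin \<theta>)\<^sup>2" using sn by simp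
          ultimately have "(y * cot \<theta>)\<^sup>2 + y\<^sup>2 = (y\<^sup>2 * (cos \<theta>)\<^sup>2 + y\<^sup>2 * (sin \<theta>)\<^sup>2) / (sin \<theta>)\<^sup>2"
            by (metis add_divide_distrib)
          also have "y\<^sup>2 * (cos \<theta>)\<^sup>2 + y\<^sup>2 * (sin \<theta>)\<^sup>2 = y\<^sup>2"
            by (metis distrib_left mult.right_neutral sin_cos_squared_add add.commute)
          finally show ?thesis .
        qed
        also have "\<dots> > 1" using sp st y by (simp add: power_strict_mono)
        finally have "1 \<le> cmod (Complex (y * cot \<theta>) y)"
          using power_less_imp_less_base[of 1 2 "cmod (Complex (y * cot \<theta>) y)"] by simp
        then show ?thesis using nab H0 by simp
      qed (use nab in simp)
    qed
  qed
  finally show ?thesis .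
qed


lemma borel_measurable_cot'[measurable]:
  fixes f :: "'a \<Rightarrow> real"
  assumes [measurable]: "f \<in> borel_measurable M"
  shows "(\<lambda>x. cot (f x)) \<in> borel_measurable M"
  unfolding cot_def by measurable

lemma upper_polar:
  fixes H :: "complex \<Rightarrow> ennreal"
  assumes [measurable]: "H \<in> borel_measurable borel"
    and H0: "\<And>z. 1 \<le> cmod z \<Longrightarrow> H z = 0"
  shows "(\<integral>\<^sup>+y. indicator {0<..} y * (\<integral>\<^sup>+x. H (Complex x y) \<partial>lborel) \<partial>lborel)
    = (\<integral>\<^sup>+\<theta>. indicator {0<..<pi} \<theta> * (\<integral>\<^sup>+r. indicator {0<..} r * ennreal r * H (Complex (r * cos \<theta>) (r * sin \<theta>)) \<partial>lborel) \<partial>lborel)"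
proof -
  have "(\<integral>\<^sup>+y. indicator {0<..} y * (\<integral>\<^sup>+x. H (Complex x y) \<partial>lborel) \<partial>lborel)
     = (\<integral>\<^sup>+y. indicator {0<..} y * (\<integral>\<^sup>+\<theta>. H (Complex (y * cot \<theta>) y) * ennreal (y / (sin \<theta>)\<^sup>2) * indicator {0<..<pi} \<theta> \<partial>lborel) \<partial>lborel)"
    by (rule nn_integral_cong) (auto simp: indicator_def cot_subst[OF assms(1) H0])
  also have "\<dots> = (\<integral>\<^sup>+y. \<integral>\<^sup>+\<theta>. indicator {0<..} y * (H (Complex (y * cot \<theta>) y) * ennreal (y / (sin \<theta>)\<^sup>2) * indicator {0<..<pi} \<theta>) \<partial>lborel \<partial>lborel)"
    by (rule nn_integral_cong) (simp add: nn_integral_cmult)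
  also have "\<dots> = (\<integral>\<^sup>+\<theta>. \<integral>\<^sup>+y. indicator {0<..} y * (H (Complex (y * cot \<theta>) y) * ennreal (y / (sin \<theta>)\<^sup>2) * indicator {0<..<pi} \<theta>) \<partial>lborel \<partial>lborel)"
    by (rule lborel_pair.Fubini') measurable
  also have "\<dots> = (\<integral>\<^sup>+\<theta>. indicator {0<..<pi} \<theta> * (\<integral>\<^sup>+r. indicator {0<..} r * ennreal r * H (Complex (r * cos \<theta>) (r * sin \<theta>)) \<partial>lborel) \<partial>lborel)"
  proof (rule nn_integral_cong)
    fix \<theta> :: real
    show "(\<integral>\<^sup>+y. indicator {0<..} y * (H (Complex (y * cot \<theta>) y) * ennreal (y / (sin \<theta>)\<^sup>2) * indicator {0<..<pi} \<theta>) \<partial>lborel)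
      = indicator {0<..<pi} \<theta> * (\<integral>\<^sup>+r. indicator {0<..} r * ennreal r * H (Complex (r * cos \<theta>) (r * sin \<theta>)) \<partial>lborel)"
    proof (cases "\<theta> \<in> {0<..<pi}")
      case True
      have sp: "sin \<theta> > 0" using True by (intro sin_gt_zero) auto
      have "(\<integral>\<^sup>+y. indicator {0<..} y * (H (Complex (y * cot \<theta>) y) * ennreal (y / (sin \<theta>)\<^sup>2) * indicator {0<..<pi} \<theta>) \<partial>lborel)
        = (\<integral>\<^sup>+y. indicator {0<..} y * H (Complex (y * cot \<theta>) y) * ennreal (y / (sin \<theta>)\<^sup>2) \<partial>lborel)"
        using True by (intro nn_integral_cong) (simp add: mult.assoc)
      also have "\<dots> = ennreal (sin \<theta>) * (\<integral>\<^sup>+r. indicator {0<..} (sin \<theta> * r) * H (Complex (sin \<theta> * r * cot \<theta>) (sin \<theta> * r)) * ennreal (sin \<theta> * r / (sin \<theta>)\<^sup>2) \<partial>lborel)"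
        using nn_integral_real_affine[of "\<lambda>y. indicator {0<..} y * H (Complex (y * cot \<theta>) y) * ennreal (y / (sin \<theta>)\<^sup>2)" "sin \<theta>" 0] sp
        by simp
      also have "\<dots> = (\<integral>\<^sup>+r. ennreal (sin \<theta>) * (indicator {0<..} (sin \<theta> * r) * H (Complex (sin \<theta> * r * cot \<theta>) (sin \<theta> * r)) * ennreal (sin \<theta> * r / (sin \<theta>)\<^sup>2)) \<partial>lborel)"
        by (simp add: nn_integral_cmult)
      also have "\<dots> = (\<integral>\<^sup>+r. indicator {0<..} r * ennreal r * H (Complex (r * cos \<theta>) (r * sin \<theta>)) \<partial>lborel)"
      proof (rule nn_integral_cong)
        fix r :: real
        show "ennreal (sin \<theta>) * (indicator {0<..} (sin \<theta> * r) * H (Complex (sin \<theta> * r * cot \<theta>) (sin \<theta> * r)) * ennreal (sin \<theta> * r / (sin \<theta>)\<^sup>2))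
          = indicator {0<..} r * ennreal r * H (Complex (r * cos \<theta>) (r * sin \<theta>))"
        proof (cases "r > 0")
          case True
          have e1: "sin \<theta> * r * cot \<theta> = r * cos \<theta>" using sp unfolding cot_def by simp
          have e2: "ennreal (sin \<theta>) * ennreal (sin \<theta> * r / (sin \<theta>)\<^sup>2) = ennreal r"
            using sp True by (simp add: ennreal_mult'[symmetric] power2_eq_square)
          have "ennreal (sin \<theta>) * (indicator {0<..} (sin \<theta> * r) * H (Complex (sin \<theta> * r * cot \<theta>) (sin \<theta> * r)) * ennreal (sin \<theta> * r / (sin \<theta>)\<^sup>2))
            = (ennreal (sin \<theta>) * ennreal (sin \<theta> * r / (sin \<theta>)\<^sup>2)) * H (Complex (r * cos \<theta>) (r * sin \<theta>))"
            using sp True e1 by (simp add: mult.commute mult.left_commute mult.assoc)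
          then show ?thesis using e2 True by simp
        next
          case False
          then have "\<not> sin \<theta> * r > 0" using sp by (simp add: zero_less_mult_iff)
          then show ?thesis using False by simp
        qed
      qed
      finally show ?thesis using True by simp
    qed simp
  qed
  finally show ?thesis .
qed


lemma lborel_complex: "distr (lborel \<Otimes>\<^sub>M lborel) borel (\<lambda>(x,y). Complex x y) = (lborel :: complex measure)"
proof (rule lborel_eqI[symmetric])
  fix l u :: complex
  assume le: "\<And>b. b \<in> Basis \<Longrightarrow> l \<bullet> b \<le> u \<bullet> b"
  have m: "(\<lambda>(x,y). Complex x y) \<in> (lborel \<Otimes>\<^sub>M lborel) \<rightarrow>\<^sub>M (borel :: complex measure)"
    by (simp add: case_prod_unfold Complex_eq)
  have eq: "(\<lambda>(x,y). Complex x y) -` box l u \<inter> space (lborel \<Otimes>\<^sub>M lborel) = {Re l<..<Re u} \<times> {Im l<..<Im u}"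
    by (auto simp: box_def Basis_complex_def space_pair_measure)
  show "emeasure (distr (lborel \<Otimes>\<^sub>M lborel) borel (\<lambda>(x,y). Complex x y)) (box l u) = (\<Prod>b\<in>Basis. (u - l) \<bullet> b)"
  proof -
    have "Re l \<le> Re u" "Im l \<le> Im u" using le[of 1] le[of \<i>] by (auto simp: Basis_complex_def)
    then show ?thesis
    by (simp add: emeasure_distr[OF m] eq lborel.emeasure_pair_measure_Times[where A="{Re l<..<Re u}" and N=lborel and B="{Im l<..<Im u}", simplified] Basis_complex_def ennreal_mult')
  qed
qed simp

lemma nn_integral_complex:
  fixes h :: "complex \<Rightarrow> ennreal"
  assumes [measurable]: "h \<in> borel_measurable borel"
  shows "(\<integral>\<^sup>+z. h z \<partial>lborel) = (\<integral>\<^sup>+y. \<integral>\<^sup>+x. h (Complex x y) \<partial>lborel \<partial>lborel)"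
proof -
  have "(\<integral>\<^sup>+z. h z \<partial>lborel) = (\<integral>\<^sup>+z. h z \<partial>distr (lborel \<Otimes>\<^sub>M lborel) borel (\<lambda>(x,y). Complex x y))"
    by (simp add: lborel_complex)
  also have "\<dots> = (\<integral>\<^sup>+p. h (Complex (fst p) (snd p)) \<partial>(lborel \<Otimes>\<^sub>M lborel))"
    by (subst nn_integral_distr) (auto simp: case_prod_unfold)
  also have "\<dots> = (\<integral>\<^sup>+y. \<integral>\<^sup>+x. h (Complex x y) \<partial>lborel \<partial>lborel)"
    by (subst lborel_pair.nn_integral_snd[symmetric]) auto
  finally show ?thesis .
qed

lemma full_polar:
  fixes H :: "complex \<Rightarrow> ennreal"
  assumes [measurable]: "H \<in> borel_measurable borel"
    and H0: "\<And>z. 1 \<le> cmod z \<Longrightarrow> H z = 0"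
  shows "(\<integral>\<^sup>+z. H z \<partial>lborel)
    = (\<integral>\<^sup>+\<theta>. indicator {0<..<pi} \<theta> * (\<integral>\<^sup>+r. indicator {0<..} r * ennreal r * H (Complex (r * cos \<theta>) (r * sin \<theta>)) \<partial>lborel) \<partial>lborel)
    + (\<integral>\<^sup>+\<theta>. indicator {0<..<pi} \<theta> * (\<integral>\<^sup>+r. indicator {0<..} r * ennreal r * H (Complex (r * cos \<theta>) (- (r * sin \<theta>))) \<partial>lborel) \<partial>lborel)"
proof -
  have cnjC: "cnj (Complex a b) = Complex a (-b)" for a b by (simp add: complex_eq_iff)
  have [measurable]: "(\<lambda>x. H (cnj x)) \<in> borel_measurable borel"
    by (rule measurable_compose[OF _ assms(1)]) (intro borel_measurable_continuous_onI continuous_intros)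
  define I where "I y = (\<integral>\<^sup>+x. H (Complex x y) \<partial>lborel)" for y
  have [measurable]: "I \<in> borel_measurable borel"
  proof -
    have "(\<lambda>(x, y). H (Complex x y)) \<in> borel_measurable (lborel \<Otimes>\<^sub>M lborel)" by measurable
    from lborel.borel_measurable_nn_integral_fst[OF this] show ?thesis
      unfolding I_def by (simp cong: measurable_cong_sets)
  qed
  have "(\<integral>\<^sup>+z. H z \<partial>lborel) = (\<integral>\<^sup>+y. I y \<partial>lborel)"
    unfolding I_def by (rule nn_integral_complex) simp
  also have "\<dots> = (\<integral>\<^sup>+y. indicator {0<..} y * I y + indicator {..<0} y * I y \<partial>lborel)"
    by (intro nn_integral_cong_AE eventually_mono[OF AE_lborel_singleton[of 0]])
       (auto simp: indicator_def)
  also have "\<dots> = (\<integral>\<^sup>+y. indicator {0<..} y * I y \<partial>lborel) + (\<integral>\<^sup>+y. indicator {..<0} y * I y \<partial>lborel)"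
    by (rule nn_integral_add) auto
  also have "(\<integral>\<^sup>+y. indicator {..<0} y * I y \<partial>lborel) = (\<integral>\<^sup>+y. indicator {0<..} y * I (- y) \<partial>lborel)"
    using nn_integral_real_affine[of "\<lambda>y. indicator {..<0} y * I y" "-1" 0]
    by (simp add: indicator_def)
  also have "\<dots> = (\<integral>\<^sup>+y. indicator {0<..} y * (\<integral>\<^sup>+x. (H \<circ> cnj) (Complex x y) \<partial>lborel) \<partial>lborel)"
    unfolding I_def by (simp add: o_def cnjC)
  also have "\<dots> = (\<integral>\<^sup>+\<theta>. indicator {0<..<pi} \<theta> * (\<integral>\<^sup>+r. indicator {0<..} r * ennreal r * H (Complex (r * cos \<theta>) (- (r * sin \<theta>))) \<partial>lborel) \<partial>lborel)"
    by (subst upper_polar) (auto intro: H0 simp: o_def cnjC)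
  also have "(\<integral>\<^sup>+y. indicator {0<..} y * I y \<partial>lborel) = (\<integral>\<^sup>+\<theta>. indicator {0<..<pi} \<theta> * (\<integral>\<^sup>+r. indicator {0<..} r * ennreal r * H (Complex (r * cos \<theta>) (r * sin \<theta>)) \<partial>lborel) \<partial>lborel)"
    unfolding I_def by (rule upper_polar) (auto intro: H0)
  finally show ?thesis .
qed


lemma AE_lborel_finite: "finite (X :: real set) \<Longrightarrow> AE x in lborel. x \<notin> X"
  by (rule AE_discrete_difference) (auto intro: countable_finite)

lemma polar:
  fixes H :: "complex \<Rightarrow> ennreal"
  assumes [measurable]: "H \<in> borel_measurable borel"
    and H0: "\<And>z. 1 \<le> cmod z \<Longrightarrow> H z = 0"
  shows "(\<integral>\<^sup>+z. H z \<partial>lborel)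
    = (\<integral>\<^sup>+r. indicator {0<..} r * ennreal r * (\<integral>\<^sup>+\<theta>. indicator {0..2*pi} \<theta> * H (Complex (r * cos \<theta>) (r * sin \<theta>)) \<partial>lborel) \<partial>lborel)"
proof -
  define \<Phi> where "\<Phi> \<theta> = (\<integral>\<^sup>+r. indicator {0<..} r * ennreal r * H (Complex (r * cos \<theta>) (r * sin \<theta>)) \<partial>lborel)" for \<theta>
  have [measurable]: "\<Phi> \<in> borel_measurable borel"
  proof -
    have "(\<lambda>(\<theta>, r). indicator {0<..} r * ennreal r * H (Complex (r * cos \<theta>) (r * sin \<theta>))) \<in> borel_measurable (lborel \<Otimes>\<^sub>M lborel)" by measurable
    from lborel.borel_measurable_nn_integral_fst[OF this] show ?thesis
      unfolding \<Phi>_def by (simp cong: measurable_cong_sets)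
  qed
  have "(\<integral>\<^sup>+z. H z \<partial>lborel) = (\<integral>\<^sup>+\<theta>. indicator {0<..<pi} \<theta> * \<Phi> \<theta> \<partial>lborel)
     + (\<integral>\<^sup>+\<theta>. indicator {0<..<pi} \<theta> * \<Phi> (2*pi - \<theta>) \<partial>lborel)"
  proof -
    have "\<Phi> (2*pi - \<theta>) = (\<integral>\<^sup>+r. indicator {0<..} r * ennreal r * H (Complex (r * cos \<theta>) (- (r * sin \<theta>))) \<partial>lborel)" for \<theta>
      unfolding \<Phi>_def by (simp add: sin_diff cos_diff)
    then show ?thesis using full_polar[OF assms] unfolding \<Phi>_def by simp
  qed
  also have "(\<integral>\<^sup>+\<theta>. indicator {0<..<pi} \<theta> * \<Phi> (2*pi - \<theta>) \<partial>lborel) = (\<integral>\<^sup>+\<theta>. indicator {pi<..<2*pi} \<theta> * \<Phi> \<theta> \<partial>lborel)"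
    using nn_integral_real_affine[of "\<lambda>\<theta>. indicator {pi<..<2*pi} \<theta> * \<Phi> \<theta>" "-1" "2*pi"]
    by (simp add: indicator_def conj_commute)
  also have "(\<integral>\<^sup>+\<theta>. indicator {0<..<pi} \<theta> * \<Phi> \<theta> \<partial>lborel) + (\<integral>\<^sup>+\<theta>. indicator {pi<..<2*pi} \<theta> * \<Phi> \<theta> \<partial>lborel)
     = (\<integral>\<^sup>+\<theta>. indicator {0<..<pi} \<theta> * \<Phi> \<theta> + indicator {pi<..<2*pi} \<theta> * \<Phi> \<theta> \<partial>lborel)"
    by (rule nn_integral_add[symmetric]) auto
  also have "\<dots> = (\<integral>\<^sup>+\<theta>. indicator {0..2*pi} \<theta> * \<Phi> \<theta> \<partial>lborel)"
    by (intro nn_integral_cong_AE eventually_mono[OF AE_lborel_finite[of "{0, pi, 2*pi}"]])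
       (auto simp: indicator_def)
  also have "\<dots> = (\<integral>\<^sup>+\<theta>. \<integral>\<^sup>+r. indicator {0..2*pi} \<theta> * (indicator {0<..} r * ennreal r * H (Complex (r * cos \<theta>) (r * sin \<theta>))) \<partial>lborel \<partial>lborel)"
    unfolding \<Phi>_def by (simp add: nn_integral_cmult)
  also have "\<dots> = (\<integral>\<^sup>+r. \<integral>\<^sup>+\<theta>. indicator {0..2*pi} \<theta> * (indicator {0<..} r * ennreal r * H (Complex (r * cos \<theta>) (r * sin \<theta>))) \<partial>lborel \<partial>lborel)"
    by (rule lborel_pair.Fubini'[symmetric]) measurable
  also have "\<dots> = (\<integral>\<^sup>+r. indicator {0<..} r * ennreal r * (\<integral>\<^sup>+\<theta>. indicator {0..2*pi} \<theta> * H (Complex (r * cos \<theta>) (r * sin \<theta>)) \<partial>lborel) \<partial>lborel)"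
    by (rule nn_integral_cong) (simp add: nn_integral_cmult[symmetric] mult.commute mult.left_commute)
  finally show ?thesis .
qed



lemma circ_eq: "circlepath 0 r x = Complex (r * cos (2*pi*x)) (r * sin (2*pi*x))"
proof -
  have "exp (2 * complex_of_real pi * \<i> * complex_of_real x) = cis (2*pi*x)"
    by (simp add: cis_conv_exp mult_ac)
  then show ?thesis by (simp add: circlepath complex_eq_iff)
qed

lemma circle_bound:
  fixes zs :: "nat \<Rightarrow> complex" and r :: real
  assumes r: "r > 0" and nr: "\<And>k. k < n \<Longrightarrow> cmod (zs k) \<noteq> r"
  shows "ennreal (2*pi*card {k. k < n \<and> cmod (zs k) < r})
    \<le> ennreal r * (\<integral>\<^sup>+\<theta>. indicator {0..2*pi} \<theta> * ennreal (cmod (\<Sum>k<n. 1 / (Complex (r * cos \<theta>) (r * sin \<theta>) - zs k))) \<partial>lborel)"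
proof -
  define F where "F w = (\<Sum>k<n. 1 / (w - zs k))" for w
  define \<gamma> where "\<gamma> = circlepath 0 r"
  have [measurable]: "F \<in> borel_measurable borel" unfolding F_def[abs_def] by measurable
  have m1[measurable]: "(\<lambda>x. indicator {0..2*pi} (2*pi*x) * ennreal (cmod (F (Complex (r * cos (2*pi*x)) (r * sin (2*pi*x)))))) \<in> borel_measurable borel"
    by measurable
  have m2[measurable]: "(\<lambda>\<theta>. indicator {0..2*pi} \<theta> * ennreal (cmod (F (Complex (r * cos \<theta>) (r * sin \<theta>))))) \<in> borel_measurable borel"
    by measurable
  define c where "c = (\<Sum>k<n. 2*pi*\<i>*winding_number \<gamma> (zs k))"
  have nin: "zs k \<notin> path_image \<gamma>" if "k < n" for k
    using nr[OF that] r unfolding \<gamma>_def by simp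
  have wn: "winding_number \<gamma> (zs k) = (if cmod (zs k) < r then 1 else 0)" if "k < n" for k
  proof (cases "cmod (zs k) < r")
    case True
    then show ?thesis unfolding \<gamma>_def by (simp add: winding_number_circlepath)
  next
    case False
    then have "zs k \<notin> cball 0 r" using nr[OF that] by auto
    then show ?thesis using False r unfolding \<gamma>_def
      by (subst winding_number_zero_outside[where s="cball 0 r"]) (auto simp: valid_path_imp_path)
  qed
  have cval: "c = 2*pi*\<i>*card {k. k < n \<and> cmod (zs k) < r}"
  proof -
    have "c = (\<Sum>k<n. 2*pi*\<i>*(if cmod (zs k) < r then 1 else 0))"
      unfolding c_def by (intro sum.cong) (auto simp: wn)
    also have "\<dots> = 2*pi*\<i>*(\<Sum>k<n. (if cmod (zs k) < r then 1 else 0))"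
      by (simp add: sum_distrib_left)
    also have "(\<Sum>k<n. (if cmod (zs k) < r then 1 else 0)) = (of_nat (card {k. k < n \<and> cmod (zs k) < r}) :: complex)"
      by (simp add: sum.If_cases lessThan_def Collect_conj_eq Int_commute)
    finally show ?thesis by simp
  qed
  have "(F has_contour_integral c) \<gamma>"
    unfolding F_def c_def
    by (intro has_contour_integral_sum has_contour_integral_winding_number) (use nin in \<open>auto simp: \<gamma>_def\<close>)
  then have hi: "((\<lambda>x. F (\<gamma> x) * (2 * pi * \<i> * r * exp (2 * of_real pi * \<i> * x))) has_integral c) {0..1}"
    unfolding has_contour_integral \<gamma>_def
    using vector_derivative_at[OF has_vector_derivative_circlepath] by simp
  define \<psi> where "\<psi> x = F (\<gamma> x) * (2 * pi * \<i> * r * exp (2 * of_real pi * \<i> * x))" for x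
  have hi': "(\<psi> has_integral c) {0..1}" using hi unfolding \<psi>_def .
  have ng: "cmod (\<gamma> x) = r" for x
    using r unfolding \<gamma>_def circlepath by (simp add: norm_mult)
  have cg: "continuous_on {0..1} \<gamma>" unfolding \<gamma>_def circlepath by (intro continuous_intros)
  have contF: "continuous_on {0..1} (\<lambda>x. F (\<gamma> x))"
    unfolding F_def
  proof (rule continuous_on_sum)
    fix k assume k: "k \<in> {..<n}"
    have "\<gamma> x - zs k \<noteq> 0" for x using nr[of k] ng[of x] k by auto
    then show "continuous_on {0..1} (\<lambda>x. 1 / (\<gamma> x - zs k))"
      by (intro continuous_intros cg) auto
  qed
  have cont\<psi>: "continuous_on {0..1} (\<lambda>x. norm (\<psi> x))"
    unfolding \<psi>_def by (intro continuous_intros contF)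
  have nps: "norm (\<psi> x) = 2 * pi * r * cmod (F (\<gamma> x))" for x
    using r unfolding \<psi>_def by (simp add: norm_mult)
  have "norm c \<le> integral {0..1} (\<lambda>x. norm (\<psi> x))"
  proof -
    have "norm (integral {0..1} \<psi>) \<le> integral {0..1} (\<lambda>x. norm (\<psi> x))"
      by (rule integral_norm_bound_integral) (use hi' has_integral_integrable integrable_continuous_interval[OF cont\<psi>] in auto)
    then show ?thesis using hi' integral_unique by auto
  qed
  then have "ennreal (norm c) \<le> ennreal (integral {0..1} (\<lambda>x. norm (\<psi> x)))"
    by (rule ennreal_leI)
  also have "\<dots> = (\<integral>\<^sup>+x. ennreal (norm (\<psi> x)) * indicator {0..1} x \<partial>lborel)"
    by (rule nn_integral_has_integral_lebesgue'[symmetric]) (auto intro: integrable_integral integrable_continuous_interval[OF cont\<psi>])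
  also have "\<dots> = ennreal r * (ennreal (2*pi) * (\<integral>\<^sup>+x. indicator {0..2*pi} (2*pi*x) * ennreal (cmod (F (Complex (r * cos (2*pi*x)) (r * sin (2*pi*x))))) \<partial>lborel))"
  proof -
    have "(\<integral>\<^sup>+x. ennreal (norm (\<psi> x)) * indicator {0..1} x \<partial>lborel)
      = (\<integral>\<^sup>+x. ennreal r * (ennreal (2*pi) * (indicator {0..2*pi} (2*pi*x) * ennreal (cmod (F (Complex (r * cos (2*pi*x)) (r * sin (2*pi*x))))))) \<partial>lborel)"
    proof (rule nn_integral_cong)
      fix x :: real
      have "indicator {0..1} x = (indicator {0..2*pi} (2*pi*x) :: ennreal)"
      proof -
        have p: "pi > 0" by simp
        have "(0 \<le> 2*pi*x) = (0 \<le> x)" using p zero_le_mult_iff[of "2*pi" x] by smt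
        moreover have "(2*pi*x \<le> 2*pi) = (x \<le> 1)" using p by simp
        ultimately show ?thesis by (simp add: indicator_def)
      qed
      then show "ennreal (norm (\<psi> x)) * indicator {0..1} x = ennreal r * (ennreal (2*pi) * (indicator {0..2*pi} (2*pi*x) * ennreal (cmod (F (Complex (r * cos (2*pi*x)) (r * sin (2*pi*x)))))))"
        using r by (simp add: nps \<gamma>_def circ_eq ennreal_mult' ennreal_mult mult_ac)
    qed
    also have "\<dots> = ennreal r * (ennreal (2*pi) * (\<integral>\<^sup>+x. indicator {0..2*pi} (2*pi*x) * ennreal (cmod (F (Complex (r * cos (2*pi*x)) (r * sin (2*pi*x))))) \<partial>lborel))"
      by (simp add: nn_integral_cmult m1)
    finally show ?thesis .
  qed
  also have "ennreal (2*pi) * (\<integral>\<^sup>+x. indicator {0..2*pi} (2*pi*x) * ennreal (cmod (F (Complex (r * cos (2*pi*x)) (r * sin (2*pi*x))))) \<partial>lborel)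
     = (\<integral>\<^sup>+\<theta>. indicator {0..2*pi} \<theta> * ennreal (cmod (F (Complex (r * cos \<theta>) (r * sin \<theta>)))) \<partial>lborel)"
    using nn_integral_real_affine[of "\<lambda>\<theta>. indicator {0..2*pi} \<theta> * ennreal (cmod (F (Complex (r * cos \<theta>) (r * sin \<theta>))))" "2*pi" 0]
    using m2 by simp
  finally show ?thesis unfolding cval F_def by (simp add: norm_mult)
qed


theorem lemma4p1:
  fixes n :: nat and zs :: "nat \<Rightarrow> complex"
  assumes "\<And>k. k < n \<Longrightarrow> zs k \<in> ball 0 1"
  shows "ennreal (2 * pi * (\<Sum>k<n. 1 - cmod (zs k)))
    \<le> (\<integral>\<^sup>+ z \<in> ball (0::complex) 1. ennreal (cmod (\<Sum>k<n. 1 / (z - zs k))) \<partial>lborel)"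
proof -
  define G where "G z = cmod (\<Sum>k<n. 1 / (z - zs k))" for z
  define H where "H z = ennreal (G z) * indicator (ball 0 1) z" for z
  have zn: "cmod (zs k) < 1" if "k < n" for k using assms[OF that] by simp
  have [measurable]: "G \<in> borel_measurable borel" unfolding G_def[abs_def] by measurable
  have [measurable]: "ball (0::complex) 1 \<in> sets borel" by simp
  have Hm[measurable]: "H \<in> borel_measurable borel" unfolding H_def[abs_def] by measurable
  have H0: "H z = 0" if "1 \<le> cmod z" for z using that unfolding H_def by (simp add: indicator_def)
  have cm: "cmod (Complex (r * cos \<theta>) (r * sin \<theta>)) = \<bar>r\<bar>" for r \<theta>
  proof -
    have e: "r\<^sup>2 * (cos \<theta>)\<^sup>2 + r\<^sup>2 * (sin \<theta>)\<^sup>2 = r\<^sup>2"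
      by (metis distrib_left mult.right_neutral sin_cos_squared_add add.commute)
    have "cmod (Complex (r * cos \<theta>) (r * sin \<theta>)) = sqrt (r\<^sup>2 * (cos \<theta>)\<^sup>2 + r\<^sup>2 * (sin \<theta>)\<^sup>2)"
      by (simp add: complex_norm power_mult_distrib)
    then show ?thesis by (simp only: e real_sqrt_abs)
  qed
  define P where "P r = real (card {k. k < n \<and> cmod (zs k) < r})" for r
  have "(\<integral>\<^sup>+r. ennreal (2 * pi * P r) * indicator {0<..<1} r \<partial>lborel)
     \<le> (\<integral>\<^sup>+r. indicator {0<..} r * ennreal r * (\<integral>\<^sup>+\<theta>. indicator {0..2*pi} \<theta> * H (Complex (r * cos \<theta>) (r * sin \<theta>)) \<partial>lborel) \<partial>lborel)"
  proof (rule nn_integral_mono_AE)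
    show "AE r in lborel. ennreal (2 * pi * P r) * indicator {0<..<1} r
       \<le> indicator {0<..} r * ennreal r * (\<integral>\<^sup>+\<theta>. indicator {0..2*pi} \<theta> * H (Complex (r * cos \<theta>) (r * sin \<theta>)) \<partial>lborel)"
    proof (rule eventually_mono[OF AE_lborel_finite[of "(\<lambda>k. cmod (zs k)) ` {..<n}"]])
      fix r :: real
      assume nr: "r \<notin> (\<lambda>k. cmod (zs k)) ` {..<n}"
      show "ennreal (2 * pi * P r) * indicator {0<..<1} r
       \<le> indicator {0<..} r * ennreal r * (\<integral>\<^sup>+\<theta>. indicator {0..2*pi} \<theta> * H (Complex (r * cos \<theta>) (r * sin \<theta>)) \<partial>lborel)"
      proof (cases "r \<in> {0<..<1}")
        case True
        have "(\<integral>\<^sup>+\<theta>. indicator {0..2*pi} \<theta> * H (Complex (r * cos \<theta>) (r * sin \<theta>)) \<partial>lborel)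
          = (\<integral>\<^sup>+\<theta>. indicator {0..2*pi} \<theta> * ennreal (cmod (\<Sum>k<n. 1 / (Complex (r * cos \<theta>) (r * sin \<theta>) - zs k))) \<partial>lborel)"
          using True by (intro nn_integral_cong) (simp add: H_def G_def cm)
        moreover have "ennreal (2*pi*card {k. k < n \<and> cmod (zs k) < r})
          \<le> ennreal r * (\<integral>\<^sup>+\<theta>. indicator {0..2*pi} \<theta> * ennreal (cmod (\<Sum>k<n. 1 / (Complex (r * cos \<theta>) (r * sin \<theta>) - zs k))) \<partial>lborel)"
          using True nr by (intro circle_bound) auto
        ultimately show ?thesis using True by (simp add: P_def)
      qed simp
    qed simp
  qed
  also have "\<dots> = (\<integral>\<^sup>+z. H z \<partial>lborel)"
    by (rule polar[symmetric]) (use H0 in auto)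
  also have "(\<integral>\<^sup>+z. H z \<partial>lborel) = (\<integral>\<^sup>+ z \<in> ball (0::complex) 1. ennreal (cmod (\<Sum>k<n. 1 / (z - zs k))) \<partial>lborel)"
    unfolding H_def G_def by simp
  also have "(\<integral>\<^sup>+r. ennreal (2 * pi * P r) * indicator {0<..<1} r \<partial>lborel)
     = (\<integral>\<^sup>+r. (\<Sum>k<n. ennreal (2 * pi) * indicator {cmod (zs k)<..<1} r) \<partial>lborel)"
  proof (rule nn_integral_cong)
    fix r :: real
    have Pr: "P r = (\<Sum>k<n. if cmod (zs k) < r then 1 else 0)"
      unfolding P_def by (simp add: sum.If_cases lessThan_def Collect_conj_eq Int_commute)
    then have "ennreal (2 * pi * P r) * indicator {0<..<1} r = (\<Sum>k<n. ennreal (2 * pi) * (if cmod (zs k) < r then 1 else 0)) * indicator {0<..<1} r"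
    proof -
      have ie: "ennreal (if b then 1 else 0) = (if b then 1 else 0)" for b by simp
      show ?thesis using Pr by (simp add: sum_distrib_left ennreal_mult' sum_ennreal[symmetric] ie del: sum_ennreal)
    qed
    also have "\<dots> = (\<Sum>k<n. ennreal (2 * pi) * indicator {cmod (zs k)<..<1} r)"
    proof (cases "r \<in> {0<..<1}")
      case True
      have "indicator {cmod (zs k)<..<1} r = (if cmod (zs k) < r then 1 else 0 :: ennreal)" for k
        using True by (auto simp: indicator_def)
      then show ?thesis using True by simp
    next
      case False
      have "indicator {cmod (zs k)<..<1} r = (0::ennreal)" for k
      proof -
        have nf: "\<not> (0 < r \<and> r < 1)" using False by simp
        have "\<not> (cmod (zs k) < r \<and> r < 1)" using nf norm_ge_zero[of "zs k"] by linarith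
        then show ?thesis by (simp add: indicator_def)
      qed
      then show ?thesis using False by simp
    qed
    finally show "ennreal (2 * pi * P r) * indicator {0<..<1} r = (\<Sum>k<n. ennreal (2 * pi) * indicator {cmod (zs k)<..<1} r)" .
  qed
  also have "\<dots> = (\<Sum>k<n. ennreal (2 * pi) * (1 - cmod (zs k)))"
  proof -
    have "(\<integral>\<^sup>+r. ennreal (2 * pi) * indicator {cmod (zs k)<..<1} r \<partial>lborel) = ennreal (2 * pi) * (1 - cmod (zs k))" if "k < n" for k
      using zn[OF that] by (simp add: nn_integral_cmult emeasure_lborel_Ioo less_imp_le)
    then show ?thesis by (subst nn_integral_sum) (auto intro!: sum.cong)
  qed
  also have "\<dots> = ennreal (2 * pi * (\<Sum>k<n. 1 - cmod (zs k)))"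
  proof -
    have "(\<Sum>k<n. ennreal (2 * pi) * ennreal (1 - cmod (zs k))) = (\<Sum>k<n. ennreal (2 * pi * (1 - cmod (zs k))))"
      by (simp add: ennreal_mult')
    also have "\<dots> = ennreal (\<Sum>k<n. 2 * pi * (1 - cmod (zs k)))"
      by (rule sum_ennreal) (use zn in \<open>force simp: less_imp_le\<close>)
    finally show ?thesis by (simp add: sum_distrib_left)
  qed
  finally show ?thesis by simp
qed

end
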